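(* Let $M^5\subset\mathbb{C}^3$ be a hypersurface of class $\mathcal{C}^\kappa$ ($\kappa\ge3$), $\mathcal{C}^\infty$ or $\mathcal{C}^\omega$, given in holomorphic coordinates $(z_1,z_2,w)$, $z_k=x_k+\sqrt{-1}y_k$, $w=u+\sqrt{-1}v$, by $v=\varphi(x_1,x_2,y_1,y_2,u)$ with $\varphi$ real-valued. Set $$A_i:=-\frac{\varphi_{z_i}}{\sqrt{-1}+\varphi_u},\qquad \mathcal{L}_i:=\frac{\partial}{\partial z_i}+A_i\frac{\partial}{\partial u},\qquad \overline{\mathcal{L}}_i:=\frac{\partial}{\partial\bar z_i}+\overline{A_i}\frac{\partial}{\partial u}\qquad(i=1,2),$$ and assume that $\mathcal{L}_1(\overline{A_1})$, $\overline{\mathcal{L}}_1(A_1)$ and $\mathcal{L}_1(\overline{A_1})-\overline{\mathcal{L}}_1(A_1)$ are nowhere zero on the domain considered. Then $$-\frac{\mathcal{L}_2(\overline{A_1})-\overline{\mathcal{L}}_1(A_2)}{\mathcal{L}_1(\overline{A_1})-\overline{\mathcal{L}}_1(A_1)}=-\frac{\mathcal{L}_2(\overline{A_1})}{\mathcal{L}_1(\overline{A_1})}=-\frac{\overline{\mathcal{L}}_1(A_2)}{\overline{\mathcal{L}}_1(A_1)}.$$ (When the Levi form of $M$ has rank $1$ everywhere, this common value $k$ is the function for which $\mathcal{K}=k\mathcal{L}_1+\mathcal{L}_2$ generates the Levi kernel.)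
   Context: Notation: $\varphi_{z_i}=\tfrac12(\partial_{x_i}-\sqrt{-1}\partial_{y_i})\varphi$, $\varphi_{\bar z_i}=\overline{\varphi_{z_i}}$, $\varphi_u=\partial\varphi/\partial u$. The fields $\mathcal{L}_1,\mathcal{L}_2$ are written intrinsically on $M$ in the coordinates $(x_1,x_2,y_1,y_2,u)$ and form a frame of $T^{1,0}M$. *)

theory Defs
  imports "HOL-Analysis.Analysis" "HOL-Library.Numeral_Type"
begin

text \<open>Points of M are parametrised by (x1,x2,y1,y2,u) in real^5, with coordinate
  indices 0 = x1, 1 = x2, 2 = y1, 3 = y2, 4 = u.\<close>

definition partial :: "5 \<Rightarrow> (real^5 \<Rightarrow> 'a::real_normed_vector) \<Rightarrow> real^5 \<Rightarrow> 'a" where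
  "partial k f p = vector_derivative (\<lambda>t. f (p + t *\<^sub>R axis k 1)) (at 0)"

fun Ck :: "nat \<Rightarrow> (real^5 \<Rightarrow> 'a::real_normed_vector) \<Rightarrow> (real^5) set \<Rightarrow> bool" where
  "Ck 0 f U = continuous_on U f"
| "Ck (Suc k) f U = ((\<forall>p\<in>U. f differentiable (at p)) \<and> (\<forall>i. Ck k (partial i f) U))"

definition xidx :: "nat \<Rightarrow> 5" where "xidx i = (if i = 1 then 0 else 1)"
definition yidx :: "nat \<Rightarrow> 5" where "yidx i = (if i = 1 then 2 else 3)"
definition uidx :: 5 where "uidx = 4"

definition dz :: "nat \<Rightarrow> (real^5 \<Rightarrow> complex) \<Rightarrow> real^5 \<Rightarrow> complex" where
  "dz i f p = (1/2) * (partial (xidx i) f p - \<i> * partial (yidx i) f p)"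
definition dzb :: "nat \<Rightarrow> (real^5 \<Rightarrow> complex) \<Rightarrow> real^5 \<Rightarrow> complex" where
  "dzb i f p = (1/2) * (partial (xidx i) f p + \<i> * partial (yidx i) f p)"
definition du :: "(real^5 \<Rightarrow> complex) \<Rightarrow> real^5 \<Rightarrow> complex" where
  "du f p = partial uidx f p"

definition Phi :: "(real^5 \<Rightarrow> real) \<Rightarrow> real^5 \<Rightarrow> complex" where
  "Phi \<phi> p = complex_of_real (\<phi> p)"

definition Acoef :: "(real^5 \<Rightarrow> real) \<Rightarrow> nat \<Rightarrow> real^5 \<Rightarrow> complex" where
  "Acoef \<phi> i p = - dz i (Phi \<phi>) p / (\<i> + du (Phi \<phi>) p)"
definition Abar :: "(real^5 \<Rightarrow> real) \<Rightarrow> nat \<Rightarrow> real^5 \<Rightarrow> complex" where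
  "Abar \<phi> i p = cnj (Acoef \<phi> i p)"

definition Lop :: "(real^5 \<Rightarrow> real) \<Rightarrow> nat \<Rightarrow> (real^5 \<Rightarrow> complex) \<Rightarrow> real^5 \<Rightarrow> complex" where
  "Lop \<phi> i g p = dz i g p + Acoef \<phi> i p * du g p"
definition Lbar :: "(real^5 \<Rightarrow> real) \<Rightarrow> nat \<Rightarrow> (real^5 \<Rightarrow> complex) \<Rightarrow> real^5 \<Rightarrow> complex" where
  "Lbar \<phi> i g p = dzb i g p + Abar \<phi> i p * du g p"

end

theory Submission imports Defs begin

lemma partial_eq:
  assumes "(g has_derivative g') (at p)"
  shows "partial k g p = g' (axis k 1)"
proof -
  let ?v = "axis k (1::real) :: real^5"
  have l: "((\<lambda>t. p + t *\<^sub>R ?v) has_derivative (\<lambda>t. t *\<^sub>R ?v)) (at 0)"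
    by (auto intro!: derivative_eq_intros)
  have "((\<lambda>t. g (p + t *\<^sub>R ?v)) has_derivative (\<lambda>t. g' (t *\<^sub>R ?v))) (at 0)"
    using has_derivative_compose[OF l] assms by simp
  moreover have "(\<lambda>t. g' (t *\<^sub>R ?v)) = (\<lambda>t. t *\<^sub>R g' ?v)"
    using linear_scale[OF has_derivative_linear[OF assms]] by auto
  ultimately have "((\<lambda>t. g (p + t *\<^sub>R ?v)) has_vector_derivative g' ?v) (at 0)"
    unfolding has_vector_derivative_def by simp
  then show ?thesis unfolding partial_def by (rule vector_derivative_at)
qed

lemma line_deriv:
  fixes g :: "real^5 \<Rightarrow> real"
  assumes "g differentiable (at (x + s *\<^sub>R axis k 1))"
  shows "((\<lambda>t. g (x + t *\<^sub>R axis k 1)) has_real_derivative partial k g (x + s *\<^sub>R axis k 1)) (at s)"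
proof -
  let ?v = "axis k (1::real) :: real^5"
  obtain g' where g': "(g has_derivative g') (at (x + s *\<^sub>R ?v))"
    using assms unfolding differentiable_def by blast
  have l: "((\<lambda>t. x + t *\<^sub>R ?v) has_derivative (\<lambda>t. t *\<^sub>R ?v)) (at s)"
    by (auto intro!: derivative_eq_intros)
  have "((\<lambda>t. g (x + t *\<^sub>R ?v)) has_derivative (\<lambda>t. g' (t *\<^sub>R ?v))) (at s)"
    by (rule has_derivative_compose[OF l g'])
  moreover have "(\<lambda>t. g' (t *\<^sub>R ?v)) = (\<lambda>t. g' ?v * t)"
    using linear_scale[OF has_derivative_linear[OF g']] by (auto simp: mult.commute)
  ultimately show ?thesis
    unfolding has_field_derivative_def partial_eq[OF g'] by simp
qed

lemma route:
  fixes f :: "real^5 \<Rightarrow> real"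
  assumes "ball p r \<subseteq> U" "0 < h" "2*h < r"
    and df: "\<forall>q\<in>U. f differentiable (at q)"
    and dfa: "\<forall>q\<in>U. partial a f differentiable (at q)"
  shows "\<exists>q. dist q p < r \<and>
     f (p + h *\<^sub>R axis a 1 + h *\<^sub>R axis b 1) - f (p + h *\<^sub>R axis a 1)
       - f (p + h *\<^sub>R axis b 1) + f p = h^2 * partial b (partial a f) q"
proof -
  let ?ea = "axis a (1::real) :: real^5"
  let ?eb = "axis b (1::real) :: real^5"
  have inU: "p + s *\<^sub>R ?ea + t *\<^sub>R ?eb \<in> U \<and> dist (p + s *\<^sub>R ?ea + t *\<^sub>R ?eb) p < r"
    if "0 \<le> s" "s \<le> h" "0 \<le> t" "t \<le> h" for s t
  proof -
    have "norm (s *\<^sub>R ?ea + t *\<^sub>R ?eb) \<le> norm (s *\<^sub>R ?ea) + norm (t *\<^sub>R ?eb)"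
      by (rule norm_triangle_ineq)
    also have "\<dots> = s + t" using that by simp
    finally have "dist (p + s *\<^sub>R ?ea + t *\<^sub>R ?eb) p < r"
      using that assms by (simp add: dist_norm add.assoc)
    then show ?thesis using assms(1) by (auto simp: dist_commute)
  qed
  define \<psi> where "\<psi> s = f (p + h *\<^sub>R ?eb + s *\<^sub>R ?ea) - f (p + s *\<^sub>R ?ea)" for s
  have "\<exists>z. 0 < z \<and> z < h \<and> \<psi> h - \<psi> 0 = (h - 0) *
      (partial a f (p + h *\<^sub>R ?eb + z *\<^sub>R ?ea) - partial a f (p + z *\<^sub>R ?ea))"
  proof (rule MVT2)
    fix s assume s: "0 \<le> s" "s \<le> h"
    have 1: "p + h *\<^sub>R ?eb + s *\<^sub>R ?ea \<in> U" using inU[of s h] s assms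
      by (simp add: algebra_simps)
    have 2: "p + s *\<^sub>R ?ea \<in> U" using inU[of s 0] s assms by simp
    show "(\<psi> has_real_derivative
      (partial a f (p + h *\<^sub>R ?eb + s *\<^sub>R ?ea) - partial a f (p + s *\<^sub>R ?ea))) (at s)"
      unfolding \<psi>_def
      by (intro DERIV_diff line_deriv) (use 1 2 df in auto)
  qed (use assms in auto)
  then obtain s1 where s1: "0 < s1" "s1 < h" "\<psi> h - \<psi> 0 = h *
      (partial a f (p + h *\<^sub>R ?eb + s1 *\<^sub>R ?ea) - partial a f (p + s1 *\<^sub>R ?ea))" by auto
  have "\<exists>z. 0 < z \<and> z < h \<and> partial a f (p + s1 *\<^sub>R ?ea + h *\<^sub>R ?eb)
      - partial a f (p + s1 *\<^sub>R ?ea + 0 *\<^sub>R ?eb) = (h - 0) *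
      partial b (partial a f) (p + s1 *\<^sub>R ?ea + z *\<^sub>R ?eb)"
  proof (rule MVT2)
    fix t assume t: "0 \<le> t" "t \<le> h"
    have 1: "p + s1 *\<^sub>R ?ea + t *\<^sub>R ?eb \<in> U" using inU[of s1 t] s1 t by simp
    show "((\<lambda>t. partial a f (p + s1 *\<^sub>R ?ea + t *\<^sub>R ?eb)) has_real_derivative
      partial b (partial a f) (p + s1 *\<^sub>R ?ea + t *\<^sub>R ?eb)) (at t)"
      by (rule line_deriv) (use 1 dfa in auto)
  qed (use assms in auto)
  then obtain t1 where t1: "0 < t1" "t1 < h" "partial a f (p + s1 *\<^sub>R ?ea + h *\<^sub>R ?eb)
      - partial a f (p + s1 *\<^sub>R ?ea) = h *
      partial b (partial a f) (p + s1 *\<^sub>R ?ea + t1 *\<^sub>R ?eb)" by auto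
  show ?thesis
  proof (intro exI conjI)
    show "dist (p + s1 *\<^sub>R ?ea + t1 *\<^sub>R ?eb) p < r" using inU[of s1 t1] s1 t1 by simp
    have e: "p + h *\<^sub>R ?eb + s1 *\<^sub>R ?ea = p + s1 *\<^sub>R ?ea + h *\<^sub>R ?eb"
      by (simp add: algebra_simps)
    have "f (p + h *\<^sub>R ?ea + h *\<^sub>R ?eb) - f (p + h *\<^sub>R ?ea) - f (p + h *\<^sub>R ?eb) + f p
        = \<psi> h - \<psi> 0" unfolding \<psi>_def by (simp add: algebra_simps)
    also have "\<dots> = h * (h * partial b (partial a f) (p + s1 *\<^sub>R ?ea + t1 *\<^sub>R ?eb))"
      using s1(3) t1(3) e by simp
    finally show "f (p + h *\<^sub>R ?ea + h *\<^sub>R ?eb) - f (p + h *\<^sub>R ?ea) - f (p + h *\<^sub>R ?eb) + f p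
        = h^2 * partial b (partial a f) (p + s1 *\<^sub>R ?ea + t1 *\<^sub>R ?eb)"
      by (simp add: power2_eq_square)
  qed
qed

lemma clairaut:
  fixes f :: "real^5 \<Rightarrow> real"
  assumes "open U" "p \<in> U"
    and df: "\<forall>q\<in>U. f differentiable (at q)"
    and dfa: "\<forall>q\<in>U. partial a f differentiable (at q)"
    and dfb: "\<forall>q\<in>U. partial b f differentiable (at q)"
    and ca: "continuous (at p) (partial b (partial a f))"
    and cb: "continuous (at p) (partial a (partial b f))"
  shows "partial b (partial a f) p = partial a (partial b f) p"
proof (rule ccontr)
  let ?L1 = "partial b (partial a f) p" and ?L2 = "partial a (partial b f) p"
  assume ne: "?L1 \<noteq> ?L2"
  define e where "e = \<bar>?L1 - ?L2\<bar> / 2"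
  have e: "e > 0" using ne by (simp add: e_def)
  obtain d1 where d1: "d1 > 0" "\<forall>q. dist q p < d1 \<longrightarrow> dist (partial b (partial a f) q) ?L1 < e"
    using ca e unfolding continuous_at_eps_delta by blast
  obtain d2 where d2: "d2 > 0" "\<forall>q. dist q p < d2 \<longrightarrow> dist (partial a (partial b f) q) ?L2 < e"
    using cb e unfolding continuous_at_eps_delta by blast
  obtain r0 where r0: "r0 > 0" "ball p r0 \<subseteq> U" using assms(1,2) open_contains_ball by blast
  define r where "r = min r0 (min d1 d2)"
  have r: "r > 0" "ball p r \<subseteq> U" using r0 d1 d2 by (auto simp: r_def)
  define h where "h = r / 3"
  have h: "0 < h" "2*h < r" using r by (auto simp: h_def)
  obtain q1 where q1: "dist q1 p < r" "f (p + h *\<^sub>R axis a 1 + h *\<^sub>R axis b 1) - f (p + h *\<^sub>R axis a 1)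
       - f (p + h *\<^sub>R axis b 1) + f p = h^2 * partial b (partial a f) q1"
    using route[OF r(2) h df dfa] by blast
  obtain q2 where q2: "dist q2 p < r" "f (p + h *\<^sub>R axis b 1 + h *\<^sub>R axis a 1) - f (p + h *\<^sub>R axis b 1)
       - f (p + h *\<^sub>R axis a 1) + f p = h^2 * partial a (partial b f) q2"
    using route[OF r(2) h df dfb] by blast
  have "h^2 * partial b (partial a f) q1 = h^2 * partial a (partial b f) q2"
    using q1(2) q2(2) by (simp add: algebra_simps)
  then have eq: "partial b (partial a f) q1 = partial a (partial b f) q2" using h by simp
  have "dist q1 p < d1" "dist q2 p < d2" using q1 q2 by (auto simp: r_def)
  then have "dist (partial b (partial a f) q1) ?L1 < e" "dist (partial a (partial b f) q2) ?L2 < e"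
    using d1 d2 by auto
  then have "\<bar>?L1 - ?L2\<bar> < 2 * e" using eq by (simp add: dist_real_def)
  then show False by (simp add: e_def)
qed

lemma Ck_mono: "Ck (Suc k) f U \<Longrightarrow> Ck k f U"
proof (induction k arbitrary: f)
  case 0
  then show ?case
    by (auto intro!: continuous_at_imp_continuous_on differentiable_imp_continuous_within)
next
  case (Suc k)
  then show ?case by auto
qed

lemma Ck_le: "Ck n f U \<Longrightarrow> m \<le> n \<Longrightarrow> Ck m f U"
proof (induction n)
  case 0
  then show ?case by simp
next
  case (Suc n)
  have "Ck n f U" by (rule Ck_mono[OF Suc.prems(1)])
  then show ?case using Suc by (cases "m = Suc n") auto
qed

lemma partial_Phi:
  assumes "\<phi> differentiable (at q)"
  shows "partial k (Phi \<phi>) q = complex_of_real (partial k \<phi> q)"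
proof -
  obtain d where d: "(\<phi> has_derivative d) (at q)" using assms unfolding differentiable_def by blast
  have "(Phi \<phi> has_derivative (\<lambda>v. complex_of_real (d v))) (at q)"
    using has_derivative_of_real[OF d] by (simp add: Phi_def[abs_def])
  then show ?thesis using partial_eq[OF d] partial_eq by metis
qed

lemma alg:
  fixes D a b c x y e :: complex
  assumes "D \<noteq> 0"
  shows "((- ((1/2) * (a + c*b))) * D - (- ((1/2)*(x + c*y))) * e) / (D*D)
     = - ((1/2)*(a + c*b))/D + (1/2)*(x+c*y)*e/D^2"
  using assms by (simp add: field_simps power2_eq_square)

lemma partial_quot:
  fixes A B C :: "real^5 \<Rightarrow> real" and c d :: complex
  assumes "open S" "p \<in> S"
    and eq: "\<And>q. q \<in> S \<Longrightarrow> g q = - ((1/2) * (of_real (A q) + c * of_real (B q))) / (d + of_real (C q))"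
    and dA: "A differentiable (at p)" and dB: "B differentiable (at p)" and dC: "C differentiable (at p)"
    and nz: "d + of_real (C p) \<noteq> 0"
  shows "partial k g p = - ((1/2) * (of_real (partial k A p) + c * of_real (partial k B p))) / (d + of_real (C p))
     + (1/2) * (of_real (A p) + c * of_real (B p)) * of_real (partial k C p) / (d + of_real (C p))^2"
proof -
  obtain A' where A': "(A has_derivative A') (at p)" using dA unfolding differentiable_def by blast
  obtain B' where B': "(B has_derivative B') (at p)" using dB unfolding differentiable_def by blast
  obtain C' where C': "(C has_derivative C') (at p)" using dC unfolding differentiable_def by blast
  have hN: "((\<lambda>q. - ((1/2) * (of_real (A q) + c * of_real (B q)))) has_derivative
      (\<lambda>v. - ((1/2) * (of_real (A' v) + c * of_real (B' v))))) (at p)"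
    by (intro derivative_eq_intros) (auto intro: A' B')
  have hD: "((\<lambda>q. d + complex_of_real (C q)) has_derivative (\<lambda>v. of_real (C' v))) (at p)"
    by (intro derivative_eq_intros) (auto intro: C')
  have hG: "((\<lambda>q. - ((1/2) * (of_real (A q) + c * of_real (B q))) / (d + of_real (C q))) has_derivative
     (\<lambda>v. ((- ((1/2) * (of_real (A' v) + c * of_real (B' v)))) * (d + of_real (C p))
        - (- ((1/2) * (of_real (A p) + c * of_real (B p)))) * of_real (C' v))
        / ((d + of_real (C p)) * (d + of_real (C p))))) (at p)"
    by (rule has_derivative_divide'[OF hN hD nz])
  have hg: "(g has_derivative
     (\<lambda>v. ((- ((1/2) * (of_real (A' v) + c * of_real (B' v)))) * (d + of_real (C p))
        - (- ((1/2) * (of_real (A p) + c * of_real (B p)))) * of_real (C' v))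
        / ((d + of_real (C p)) * (d + of_real (C p))))) (at p)"
    by (rule has_derivative_transform_within_open[OF hG assms(1,2)]) (simp add: eq)
  show ?thesis
    unfolding partial_eq[OF hg] partial_eq[OF A'] partial_eq[OF B'] partial_eq[OF C']
    by (rule alg[OF nz])
qed

lemma keyalg:
  fixes D E Xi Yi Xj Yj a b c d e f g h k :: complex
  assumes "D \<noteq> 0" "E \<noteq> 0"
  shows "1/2 * ((- ((1/2) * (a + \<i> * b)) / E + (1/2) * (Xj + \<i> * Yj) * e / E^2)
          - \<i> * (- ((1/2) * (c + \<i> * d)) / E + (1/2) * (Xj + \<i> * Yj) * f / E^2))
       + (- ((1/2) * (Xi + - \<i> * Yi)) / D) * (- ((1/2) * (g + \<i> * h)) / E + (1/2) * (Xj + \<i> * Yj) * k / E^2)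
   = D / E * (1/2 * ((- ((1/2) * (a + - \<i> * c)) / D + (1/2) * (Xi + - \<i> * Yi) * g / D^2)
          + \<i> * (- ((1/2) * (b + - \<i> * d)) / D + (1/2) * (Xi + - \<i> * Yi) * h / D^2))
       + (- ((1/2) * (Xj + \<i> * Yj)) / E) * (- ((1/2) * (e + - \<i> * f)) / D + (1/2) * (Xi + - \<i> * Yi) * k / D^2))"
  using assms by (simp add: field_simps power2_eq_square)

lemma key:
  fixes \<phi> :: "real^5 \<Rightarrow> real"
  assumes U: "open U" "p \<in> U"
    and d0: "\<forall>q\<in>U. \<phi> differentiable (at q)"
    and d1: "\<forall>m. \<forall>q\<in>U. partial m \<phi> differentiable (at q)"
    and sym: "\<And>a b. partial b (partial a \<phi>) p = partial a (partial b \<phi>) p"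
  shows "Lop \<phi> i (Abar \<phi> j) p = (\<i> + of_real (partial uidx \<phi> p)) / (- \<i> + of_real (partial uidx \<phi> p))
      * Lbar \<phi> j (Acoef \<phi> i) p"
proof -
  have AbarU: "Abar \<phi> j q = - ((1/2) * (of_real (partial (xidx j) \<phi> q) + \<i> * of_real (partial (yidx j) \<phi> q)))
      / (- \<i> + of_real (partial uidx \<phi> q))" if "q \<in> U" for q
    using d0 that
    by (simp add: Abar_def Acoef_def dz_def du_def partial_Phi)
  have AcoefU: "Acoef \<phi> i q = - ((1/2) * (of_real (partial (xidx i) \<phi> q) + - \<i> * of_real (partial (yidx i) \<phi> q)))
      / (\<i> + of_real (partial uidx \<phi> q))" if "q \<in> U" for q
    using d0 that
    by (simp add: Acoef_def dz_def du_def partial_Phi)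
  have nzE: "- \<i> + complex_of_real (partial uidx \<phi> p) \<noteq> 0" by (simp add: complex_eq_iff)
  have nzD: "\<i> + complex_of_real (partial uidx \<phi> p) \<noteq> 0" by (simp add: complex_eq_iff)
  have pAb: "partial k (Abar \<phi> j) p = - ((1/2) * (of_real (partial k (partial (xidx j) \<phi>) p) + \<i> * of_real (partial k (partial (yidx j) \<phi>) p))) / (- \<i> + of_real (partial uidx \<phi> p))
     + (1/2) * (of_real (partial (xidx j) \<phi> p) + \<i> * of_real (partial (yidx j) \<phi> p)) * of_real (partial k (partial uidx \<phi>) p) / (- \<i> + of_real (partial uidx \<phi> p))^2" for k
    by (rule partial_quot[OF U AbarU]) (use d1 U nzE in auto)
  have pAc: "partial k (Acoef \<phi> i) p = - ((1/2) * (of_real (partial k (partial (xidx i) \<phi>) p) + - \<i> * of_real (partial k (partial (yidx i) \<phi>) p))) / (\<i> + of_real (partial uidx \<phi> p))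
     + (1/2) * (of_real (partial (xidx i) \<phi> p) + - \<i> * of_real (partial (yidx i) \<phi> p)) * of_real (partial k (partial uidx \<phi>) p) / (\<i> + of_real (partial uidx \<phi> p))^2" for k
    by (rule partial_quot[OF U AcoefU]) (use d1 U nzD in auto)
  show ?thesis
    unfolding Lop_def Lbar_def dz_def dzb_def du_def pAb pAc AbarU[OF U(2)] AcoefU[OF U(2)]
      sym[of "xidx i" "xidx j"] sym[of "yidx i" "xidx j"] sym[of uidx "xidx j"]
      sym[of "xidx i" "yidx j"] sym[of "yidx i" "yidx j"] sym[of uidx "yidx j"]
      sym[of "xidx i" uidx] sym[of "yidx i" uidx]
    by (rule keyalg[OF nzD nzE])
qed


lemma final_alg:
  fixes a b c d r :: complex
  assumes "a = r * b" "c = r * d" "c \<noteq> 0" "d \<noteq> 0" "c - d \<noteq> 0"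
  shows "- (a - b) / (c - d) = - a / c \<and> - a / c = - b / d"
proof -
  have r: "r \<noteq> 0" "r - 1 \<noteq> 0" using assms by (auto simp: algebra_simps)
  have "c - d = (r - 1) * d" "a - b = (r - 1) * b" using assms by (auto simp: algebra_simps)
  then show ?thesis using assms r by (simp add: field_simps)
qed

theorem mainTheorem18:
  fixes \<phi> :: "real^5 \<Rightarrow> real" and U :: "(real^5) set" and \<kappa> :: nat
  assumes "open U" and "\<kappa> \<ge> 3" and "Ck \<kappa> \<phi> U"
    and "\<forall>p\<in>U. Lop \<phi> 1 (Abar \<phi> 1) p \<noteq> 0"
    and "\<forall>p\<in>U. Lbar \<phi> 1 (Acoef \<phi> 1) p \<noteq> 0"
    and "\<forall>p\<in>U. Lop \<phi> 1 (Abar \<phi> 1) p - Lbar \<phi> 1 (Acoef \<phi> 1) p \<noteq> 0"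
  shows "\<forall>p\<in>U.
    - (Lop \<phi> 2 (Abar \<phi> 1) p - Lbar \<phi> 1 (Acoef \<phi> 2) p)
        / (Lop \<phi> 1 (Abar \<phi> 1) p - Lbar \<phi> 1 (Acoef \<phi> 1) p)
      = - Lop \<phi> 2 (Abar \<phi> 1) p / Lop \<phi> 1 (Abar \<phi> 1) p
    \<and> - Lop \<phi> 2 (Abar \<phi> 1) p / Lop \<phi> 1 (Abar \<phi> 1) p
      = - Lbar \<phi> 1 (Acoef \<phi> 2) p / Lbar \<phi> 1 (Acoef \<phi> 1) p"
proof
  fix p assume p: "p \<in> U"
  have "Ck (Suc (Suc (Suc 0))) \<phi> U" using Ck_le[OF assms(3), of 3] assms(2) by (simp add: numeral_eq_Suc del: Ck.simps)
  then have d0: "\<forall>q\<in>U. \<phi> differentiable (at q)"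
    and d1: "\<forall>m. \<forall>q\<in>U. partial m \<phi> differentiable (at q)"
    and d2: "\<forall>m n. \<forall>q\<in>U. partial n (partial m \<phi>) differentiable (at q)"
    by auto
  have sym: "partial b (partial a \<phi>) p = partial a (partial b \<phi>) p" for a b
    by (rule clairaut[OF assms(1) p d0])
       (use d1 d2 p in \<open>auto intro: differentiable_imp_continuous_within\<close>)
  note k = key[OF assms(1) p d0 d1 sym]
  show "- (Lop \<phi> 2 (Abar \<phi> 1) p - Lbar \<phi> 1 (Acoef \<phi> 2) p)
        / (Lop \<phi> 1 (Abar \<phi> 1) p - Lbar \<phi> 1 (Acoef \<phi> 1) p)
      = - Lop \<phi> 2 (Abar \<phi> 1) p / Lop \<phi> 1 (Abar \<phi> 1) p
    \<and> - Lop \<phi> 2 (Abar \<phi> 1) p / Lop \<phi> 1 (Abar \<phi> 1) p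
      = - Lbar \<phi> 1 (Acoef \<phi> 2) p / Lbar \<phi> 1 (Acoef \<phi> 1) p"
    by (rule final_alg[OF k k]) (use assms(4-6) p in auto)
qed

end
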